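(* Let $\mathcal{F}$ be a $3$-uniform linear family and let $\mathcal{M}$ be a matching (not necessarily maximum) of $\mathcal{F}$ with $n=|\mathcal{M}|\geq 3$. If $|D_2(A,B,C)|\leq 21$ for all $3$-element subsets $\{A,B,C\}\subseteq\mathcal{M}$, then $|D_2(\mathcal{F},\mathcal{M})|+|D_3(\mathcal{F},\mathcal{M})\setminus\mathcal{M}|\leq\frac{23}{n-2}\binom{n}{3}$.
   Context: A family is a finite collection of distinct subsets of a vertex set; $3$-uniform means every member has exactly $3$ elements and linear means any two distinct members share at most one vertex. A matching is a collection of pairwise disjoint members. $X_{\mathcal{M}}=\bigcup_{A\in\mathcal{M}}A$. For $i\in\{0,1,2,3\}$, $D_i(\mathcal{F},\mathcal{M})=\{E\in\mathcal{F}:|E\cap X_{\mathcal{M}}|=i\}$. For $\{A,B,C\}\subseteq\mathcal{M}$, $D_2(A,B,C)=\{E\in D_2(\mathcal{F},\mathcal{M}):|E\cap(A\cup B\cup C)|=2\}$. *)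

theory Defs
  imports Complex_Main
begin

definition uniform3 :: "'a set set \<Rightarrow> bool" where
  "uniform3 F \<longleftrightarrow> (\<forall>E\<in>F. card E = 3)"

definition linear_family :: "'a set set \<Rightarrow> bool" where
  "linear_family F \<longleftrightarrow> (\<forall>E\<in>F. \<forall>E'\<in>F. E \<noteq> E' \<longrightarrow> card (E \<inter> E') \<le> 1)"

definition is_matching :: "'a set set \<Rightarrow> 'a set set \<Rightarrow> bool" where
  "is_matching F M \<longleftrightarrow> M \<subseteq> F \<and> (\<forall>A\<in>M. \<forall>B\<in>M. A \<noteq> B \<longrightarrow> A \<inter> B = {})"

definition XM :: "'a set set \<Rightarrow> 'a set" where
  "XM M = \<Union>M"

definition D :: "nat \<Rightarrow> 'a set set \<Rightarrow> 'a set set \<Rightarrow> 'a set set" where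
  "D i F M = {E\<in>F. card (E \<inter> XM M) = i}"

definition D2_triple :: "'a set set \<Rightarrow> 'a set set \<Rightarrow> 'a set \<Rightarrow> 'a set \<Rightarrow> 'a set \<Rightarrow> 'a set set" where
  "D2_triple F M A B C = {E\<in>D 2 F M. card (E \<inter> (A \<union> B \<union> C)) = 2}"

end

theory Submission
  imports Defs
begin

lemma card2_sub_le:
  assumes "finite E" "p \<subseteq> E \<inter> A" "card p = 2"
  shows "card (E \<inter> A) \<ge> 2"
  using card_mono[OF _ assms(2)] assms by auto

theorem proposition9:
  fixes F M :: "'a set set" and n :: nat
  assumes "finite F" and "uniform3 F" and "linear_family F"
    and "is_matching F M" and "n = card M" and "n \<ge> 3"
    and "\<And>A B C. A \<in> M \<Longrightarrow> B \<in> M \<Longrightarrow> C \<in> M \<Longrightarrow> A \<noteq> B \<Longrightarrow> A \<noteq> C \<Longrightarrow> B \<noteq> C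
           \<Longrightarrow> card (D2_triple F M A B C) \<le> 21"
  shows "real (card (D 2 F M) + card (D 3 F M - M)) \<le> 23 / (real n - 2) * real (n choose 3)"
proof -
  define X where "X = \<Union>M"
  have XM: "XM M = X" by (simp add: XM_def X_def)
  have MF: "M \<subseteq> F" and disj: "\<And>A B. A \<in> M \<Longrightarrow> B \<in> M \<Longrightarrow> A \<noteq> B \<Longrightarrow> A \<inter> B = {}"
    using assms(4) by (auto simp: is_matching_def)
  have finM: "finite M" using MF assms(1) finite_subset by blast
  have c3: "\<And>E. E \<in> F \<Longrightarrow> card E = 3" using assms(2) by (auto simp: uniform3_def)
  have finE: "\<And>E. E \<in> F \<Longrightarrow> finite E" using c3 card.infinite by fastforce
  have lin: "\<And>E E'. E \<in> F \<Longrightarrow> E' \<in> F \<Longrightarrow> E \<noteq> E' \<Longrightarrow> card (E \<inter> E') \<le> 1"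
    using assms(3) by (auto simp: linear_family_def)
  have finX: "finite X" unfolding X_def using finM MF finE by blast
  define D2 where "D2 = D 2 F M"
  define D3 where "D3 = D 3 F M - M"
  have D2def: "D2 = {E\<in>F. card (E \<inter> X) = 2}" by (simp add: D2_def D_def XM)
  have D3def: "D3 = {E\<in>F. card (E \<inter> X) = 3} - M" by (simp add: D3_def D_def XM)
  have finD2: "finite D2" using assms(1) D2def by simp
  have finD3: "finite D3" using assms(1) D3def by simp
  have nopair: "\<And>E A p. E \<in> F \<Longrightarrow> A \<in> M \<Longrightarrow> E \<noteq> A \<Longrightarrow> p \<subseteq> E \<Longrightarrow> card p = 2 \<Longrightarrow> \<not> p \<subseteq> A"
  proof
    fix E A p assume h: "E \<in> F" "A \<in> M" "E \<noteq> A" "p \<subseteq> E" "card p = 2" "p \<subseteq> A"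
    have "card (E \<inter> A) \<ge> 2" using card2_sub_le[of E p A] h finE by auto
    moreover have "card (E \<inter> A) \<le> 1" using lin h MF by blast
    ultimately show False by simp
  qed
  have D2ne: "\<And>E A. E \<in> D2 \<Longrightarrow> A \<in> M \<Longrightarrow> E \<noteq> A"
  proof
    fix E A assume h: "E \<in> D2" "A \<in> M" "E = A"
    hence "E \<subseteq> X" unfolding X_def by auto
    hence "E \<inter> X = E" by auto
    thus False using h D2def c3 by auto
  qed
  have D3ne: "\<And>E A. E \<in> D3 \<Longrightarrow> A \<in> M \<Longrightarrow> E \<noteq> A" using D3def by auto
  define S where "S E = {p. p \<subseteq> E \<inter> X \<and> card p = 2}" for E
  define W where "W = (\<Union>A\<in>M. {p. p \<subseteq> A \<and> card p = 2})"
  define AP where "AP = {p. p \<subseteq> X \<and> card p = 2}"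
  define Q where "Q = AP - W"
  have SQ: "S E \<subseteq> Q" if "E \<in> D2 \<union> D3" for E
  proof
    fix p assume p: "p \<in> S E"
    have EF: "E \<in> F" using that D2def D3def by auto
    have ne: "\<And>A. A \<in> M \<Longrightarrow> E \<noteq> A" using that D2ne D3ne by auto
    have "p \<notin> W" using nopair[OF EF _ ne] p unfolding W_def S_def by auto
    thus "p \<in> Q" using p unfolding Q_def AP_def S_def by auto
  qed
  have Sdisj: "S E \<inter> S E' = {}" if "E \<in> D2 \<union> D3" "E' \<in> D2 \<union> D3" "E \<noteq> E'" for E E'
  proof (rule ccontr)
    assume "S E \<inter> S E' \<noteq> {}"
    then obtain p where p: "p \<subseteq> E \<inter> E'" "card p = 2" unfolding S_def by auto
    have EF: "E \<in> F" "E' \<in> F" using that D2def D3def by auto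
    have "card (E \<inter> E') \<ge> 2" using card2_sub_le[of E p E'] p finE EF by auto
    moreover have "card (E \<inter> E') \<le> 1" using lin EF that by blast
    ultimately show False by simp
  qed
  have cS2: "card (S E) = 1" if "E \<in> D2" for E
  proof -
    have "finite (E \<inter> X)" using finX by simp
    hence "card (S E) = card (E \<inter> X) choose 2" unfolding S_def using n_subsets by blast
    thus ?thesis using that D2def by simp
  qed
  have cS3: "card (S E) = 3" if "E \<in> D3" for E
  proof -
    have "finite (E \<inter> X)" using finX by simp
    hence "card (S E) = card (E \<inter> X) choose 2" unfolding S_def using n_subsets by blast
    thus ?thesis using that D3def by (simp add: numeral_3_eq_3 numeral_2_eq_2)
  qed
  have D23: "D2 \<inter> D3 = {}" using D2def D3def by auto
  have finS: "finite (S E)" for E unfolding S_def using finX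
    by (rule finite_subset[rotated, OF finite_Pow_iff[THEN iffD2]]) auto
  have "card (\<Union>E\<in>D2 \<union> D3. S E) = (\<Sum>E\<in>D2 \<union> D3. card (S E))"
    by (rule card_UN_disjoint) (use finD2 finD3 finS Sdisj in auto)
  also have "\<dots> = (\<Sum>E\<in>D2. card (S E)) + (\<Sum>E\<in>D3. card (S E))"
    by (rule sum.union_disjoint) (use finD2 finD3 D23 in auto)
  also have "\<dots> = card D2 + 3 * card D3" using cS2 cS3 by simp
  finally have eqU: "card (\<Union>E\<in>D2 \<union> D3. S E) = card D2 + 3 * card D3" .
  have finAP: "finite AP" unfolding AP_def using finX
    by (rule finite_subset[rotated, OF finite_Pow_iff[THEN iffD2]]) auto
  have "card (\<Union>E\<in>D2 \<union> D3. S E) \<le> card Q"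
    by (rule card_mono) (use finAP SQ in \<open>auto simp: Q_def\<close>)
  hence ineq1: "card D2 + 3 * card D3 \<le> card Q" using eqU by simp
  have cardX: "card X = 3 * n"
  proof -
    have "card X = (\<Sum>A\<in>M. card A)" unfolding X_def
      by (rule card_Union_disjoint) (use finM MF finE disj in \<open>auto simp: pairwise_def disjnt_def\<close>)
    also have "\<dots> = (\<Sum>A\<in>M. 3)" by (rule sum.cong) (use c3 MF in auto)
    also have "\<dots> = 3 * n" using assms(5) by simp
    finally show ?thesis .
  qed
  have cardAP: "card AP = (3*n) choose 2" unfolding AP_def using n_subsets[OF finX] cardX by simp
  have cardW: "card W = 3 * n"
  proof -
    have "card W = (\<Sum>A\<in>M. card {p. p \<subseteq> A \<and> card p = 2})" unfolding W_def
    proof (rule card_UN_disjoint)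
      show "finite M" by fact
      show "\<forall>A\<in>M. finite {p. p \<subseteq> A \<and> card p = 2}"
        using MF finE by (auto intro: finite_subset[rotated, OF finite_Pow_iff[THEN iffD2]])
      show "\<forall>A\<in>M. \<forall>B\<in>M. A \<noteq> B \<longrightarrow> {p. p \<subseteq> A \<and> card p = 2} \<inter> {p. p \<subseteq> B \<and> card p = 2} = {}"
      proof (intro ballI impI)
        fix A B assume h: "A \<in> M" "B \<in> M" "A \<noteq> B"
        show "{p. p \<subseteq> A \<and> card p = 2} \<inter> {p. p \<subseteq> B \<and> card p = 2} = {}"
        proof (rule ccontr)
          assume "\<not> ?thesis"
          then obtain p where "p \<subseteq> A \<inter> B" "card p = 2" by auto
          thus False using disj[OF h] by auto
        qed
      qed
    qed
    also have "\<dots> = (\<Sum>A\<in>M. 3)"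
    proof (rule sum.cong)
      fix A assume "A \<in> M"
      hence "finite A" "card A = 3" using MF finE c3 by auto
      thus "card {p. p \<subseteq> A \<and> card p = 2} = 3" using n_subsets[of A 2]
        by (simp add: numeral_3_eq_3 numeral_2_eq_2)
    qed simp
    finally show ?thesis using assms(5) by simp
  qed
  have WAP: "W \<subseteq> AP" unfolding W_def AP_def X_def by auto
  have cardQ: "card Q = ((3*n) choose 2) - 3 * n"
    unfolding Q_def using card_Diff_subset[OF finite_subset[OF WAP finAP] WAP] cardAP cardW by simp
  have ineq1': "2 * (card D2 + 3 * card D3) \<le> 9 * n * (n - 1)"
  proof -
    have ev: "even ((3*n) * (3*n - 1))" by (cases "even (3*n)") (auto simp: odd_pos)
    have "2 * ((3*n) choose 2) = 3 * n * (3 * n - 1)" unfolding choose_two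
      using ev by (metis dvd_mult_div_cancel)
    hence "2 * card Q = 3 * n * (3 * n - 1) - 6 * n" using cardQ by (simp add: diff_mult_distrib2)
    also have "\<dots> = 9 * n * (n - 1)" using assms(6)
      by (cases n) (auto simp: algebra_simps)
    finally show ?thesis using ineq1 by (metis mult_le_mono2)
  qed
  define Ts where "Ts = {T. T \<subseteq> M \<and> card T = 3}"
  define g where "g T = {E\<in>D2. card (E \<inter> \<Union>T) = 2}" for T
  have finTs: "finite Ts" unfolding Ts_def using finM
    by (rule finite_subset[rotated, OF finite_Pow_iff[THEN iffD2]]) auto
  have cardTs: "card Ts = n choose 3" unfolding Ts_def using n_subsets[OF finM] assms(5) by simp
  have gle: "card (g T) \<le> 21" if "T \<in> Ts" for T
  proof -
    obtain A B C where T: "T = {A,B,C}" "A \<noteq> B" "B \<noteq> C" "A \<noteq> C"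
      using \<open>T \<in> Ts\<close> unfolding Ts_def by (auto simp: card_3_iff)
    have "g T = D2_triple F M A B C" unfolding g_def D2_triple_def D2_def T by (auto simp: Un_assoc)
    thus ?thesis using assms(7)[of A B C] T that Ts_def by auto
  qed
  have cntE: "card {T\<in>Ts. E \<in> g T} = n - 2" if E: "E \<in> D2" for E
  proof -
    have EF: "E \<in> F" using E D2def by auto
    have c2: "card (E \<inter> X) = 2" using E D2def by auto
    then obtain x y where xy: "E \<inter> X = {x,y}" "x \<noteq> y" by (auto simp: card_2_iff)
    obtain A where A: "A \<in> M" "x \<in> A" using xy unfolding X_def by auto
    obtain B where B: "B \<in> M" "y \<in> B" using xy unfolding X_def by auto
    have AB: "A \<noteq> B"
    proof
      assume "A = B"
      hence "{x,y} \<subseteq> A" using A B by auto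
      moreover have "{x,y} \<subseteq> E" using xy by auto
      ultimately show False using nopair[OF EF A(1) D2ne[OF E A(1)], of "{x,y}"] xy by auto
    qed
    have memU: "\<And>T z C. T \<subseteq> M \<Longrightarrow> C \<in> M \<Longrightarrow> z \<in> C \<Longrightarrow> (z \<in> \<Union>T \<longleftrightarrow> C \<in> T)"
    proof -
      fix T z C assume h: "T \<subseteq> M" "C \<in> M" "z \<in> C"
      show "(z \<in> \<Union>T \<longleftrightarrow> C \<in> T)"
      proof
        assume "z \<in> \<Union>T"
        then obtain C' where "C' \<in> T" "z \<in> C'" by auto
        thus "C \<in> T" using disj[of C C'] h by blast
      qed (use h in auto)
    qed
    have iff: "E \<in> g T \<longleftrightarrow> A \<in> T \<and> B \<in> T" if T: "T \<in> Ts" for T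
    proof -
      have TM: "T \<subseteq> M" using T Ts_def by auto
      have "\<Union>T \<subseteq> X" using TM X_def by auto
      hence "E \<inter> \<Union>T = {x,y} \<inter> \<Union>T" using xy by blast
      moreover have "x \<in> \<Union>T \<longleftrightarrow> A \<in> T" using memU[OF TM A(1) A(2)] .
      moreover have "y \<in> \<Union>T \<longleftrightarrow> B \<in> T" using memU[OF TM B(1) B(2)] .
      ultimately have "card (E \<inter> \<Union>T) = 2 \<longleftrightarrow> A \<in> T \<and> B \<in> T"
        using xy(2) by (cases "x \<in> \<Union>T"; cases "y \<in> \<Union>T") (auto simp: Int_insert_left)
      thus ?thesis using E g_def by auto
    qed
    have "{T\<in>Ts. E \<in> g T} = (\<lambda>C. {A,B,C}) ` (M - {A,B})"
    proof
      show "{T\<in>Ts. E \<in> g T} \<subseteq> (\<lambda>C. {A,B,C}) ` (M - {A,B})"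
      proof
        fix T assume T: "T \<in> {T\<in>Ts. E \<in> g T}"
        hence TT: "T \<in> Ts" and ab: "A \<in> T" "B \<in> T" using iff by auto
        obtain a b c where abc: "T = {a,b,c}" "a \<noteq> b" "b \<noteq> c" "a \<noteq> c"
          using TT unfolding Ts_def by (auto simp: card_3_iff)
        have TM: "T \<subseteq> M" using TT Ts_def by auto
        have "\<exists>C. C \<in> T \<and> C \<noteq> A \<and> C \<noteq> B" using abc by auto
        then obtain C where C: "C \<in> T" "C \<noteq> A" "C \<noteq> B" by blast
        have "T = {A,B,C}" using abc ab C AB by auto
        thus "T \<in> (\<lambda>C. {A,B,C}) ` (M - {A,B})" using C TM by auto
      qed
      show "(\<lambda>C. {A,B,C}) ` (M - {A,B}) \<subseteq> {T\<in>Ts. E \<in> g T}"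
      proof
        fix T assume "T \<in> (\<lambda>C. {A,B,C}) ` (M - {A,B})"
        then obtain C where C: "C \<in> M" "C \<noteq> A" "C \<noteq> B" "T = {A,B,C}" by auto
        have "T \<in> Ts" unfolding Ts_def using C A B AB by auto
        thus "T \<in> {T\<in>Ts. E \<in> g T}" using iff C by auto
      qed
    qed
    moreover have "inj_on (\<lambda>C. {A,B,C}) (M - {A,B})"
      by (rule inj_onI) (auto simp: insert_eq_iff doubleton_eq_iff; blast)
    ultimately have "card {T\<in>Ts. E \<in> g T} = card (M - {A,B})" by (simp add: card_image)
    also have "\<dots> = n - 2" using A B AB assms(5) finM by (simp add: card_Diff_subset)
    finally show ?thesis .
  qed
  have "(\<Sum>T\<in>Ts. card (g T)) = (\<Sum>T\<in>Ts. \<Sum>E\<in>D2. if E \<in> g T then 1 else 0)"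
  proof (rule sum.cong)
    fix T assume "T \<in> Ts"
    have "g T \<subseteq> D2" unfolding g_def by auto
    hence "D2 \<inter> g T = g T" by auto
    moreover have "(\<Sum>E\<in>D2. if E \<in> g T then 1 else 0) = card (D2 \<inter> g T)"
      using finD2 by (simp add: sum.If_cases)
    ultimately show "card (g T) = (\<Sum>E\<in>D2. if E \<in> g T then 1 else 0)" by simp
  qed simp
  also have "\<dots> = (\<Sum>E\<in>D2. \<Sum>T\<in>Ts. if E \<in> g T then 1 else 0)" by (rule sum.swap)
  also have "\<dots> = (\<Sum>E\<in>D2. n - 2)"
  proof (rule sum.cong)
    fix E assume "E \<in> D2"
    have "(\<Sum>T\<in>Ts. if E \<in> g T then 1 else 0) = card {T\<in>Ts. E \<in> g T}"
      using finTs by (simp add: sum.If_cases Int_def conj_commute)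
    thus "(\<Sum>T\<in>Ts. if E \<in> g T then 1 else 0) = n - 2" using cntE[OF \<open>E \<in> D2\<close>] by simp
  qed simp
  finally have eq2: "(\<Sum>T\<in>Ts. card (g T)) = card D2 * (n - 2)" by simp
  have "(\<Sum>T\<in>Ts. card (g T)) \<le> (\<Sum>T\<in>Ts. 21)" by (rule sum_mono) (use gle in auto)
  hence ineq2: "card D2 * (n - 2) \<le> 21 * (n choose 3)" using eq2 cardTs by simp
  have ch3: "real (n choose 3) * 6 = real n * (real n - 1) * (real n - 2)"
  proof -
    obtain m where m: "n = m + 3" using assms(6) by (metis le_add_diff_inverse2)
    have "fact 3 * fact (n - 3) * (n choose 3) = fact n" using assms(6) by (rule binomial_fact_lemma)
    hence "6 * fact m * (n choose 3) = fact (m + 3)" using m by (simp add: fact_numeral)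
    also have "fact (m + 3) = (m+3) * (m+2) * (m+1) * (fact m :: nat)"
      by (simp add: fact_Suc numeral_3_eq_3 numeral_2_eq_2 algebra_simps)
    finally have "fact m * (6 * (n choose 3)) = fact m * ((m+3) * (m+2) * (m+1))" by (simp add: algebra_simps)
    hence "6 * (n choose 3) = (m+3) * (m+2) * (m+1)" by (metis fact_nonzero mult_left_cancel)
    hence "real (6 * (n choose 3)) = real ((m+3) * (m+2) * (m+1))" by simp
    thus ?thesis using m by (simp add: algebra_simps)
  qed
  have n2: "real n - 2 > 0" using assms(6) by simp
  have r2: "real (card D2) * (real n - 2) \<le> 21 * real (n choose 3)"
  proof -
    have "real (card D2 * (n - 2)) \<le> real (21 * (n choose 3))" using ineq2 by (simp only: of_nat_le_iff)
    thus ?thesis using assms(6) by (simp add: of_nat_diff)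
  qed
  have r2': "6 * real (card D2) \<le> 21 * real n * (real n - 1)"
  proof -
    have "real (card D2) * (real n - 2) * 6 \<le> 21 * real n * (real n - 1) * (real n - 2)"
      using r2 ch3 by (simp add: algebra_simps)
    hence "(6 * real (card D2)) * (real n - 2) \<le> (21 * real n * (real n - 1)) * (real n - 2)"
      by (simp add: algebra_simps)
    thus ?thesis using n2 by (meson mult_le_cancel_right_pos)
  qed
  have r1: "2 * real (card D2) + 6 * real (card D3) \<le> 9 * real n * (real n - 1)"
  proof -
    have "real (2 * (card D2 + 3 * card D3)) \<le> real (9 * n * (n - 1))" using ineq1' by (simp only: of_nat_le_iff)
    thus ?thesis using assms(6) by (simp add: of_nat_diff algebra_simps)
  qed
  have "23 / (real n - 2) * real (n choose 3) = 23 * real n * (real n - 1) / 6"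
    using ch3 n2 by (simp add: field_simps)
  moreover have "real (card D2 + card D3) \<le> 23 * real n * (real n - 1) / 6"
    using r1 r2' by simp
  ultimately show ?thesis unfolding D2_def D3_def by simp
qed

end
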